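(* Let $2\le k\le mn$, let $p_x\in\mathcal{P}_k$, let $\mathcal{D}$ be an open connected subset of $\mathbb{C}$, and let $F:\mathcal{D}\rightarrow M_{m\times n}(\mathbb{C})$ be a function whose entries are analytic (holomorphic) functions on $\mathcal{D}$. Let $\mathcal{Z}_{p_x}(\mathcal{D})=\{z\in\mathcal{D} : F(z)\text{ has repeated zeros with respect to } p_x\}$. Then either $\mathcal{Z}_{p_x}(\mathcal{D})=\mathcal{D}$ or $\mathcal{Z}_{p_x}(\mathcal{D})$ has no limit points in $\mathcal{D}$.
   Context: $M_{m\times n}(\mathbb{C})$ is the set of $m\times n$ complex matrices. Let $\mathbb{C}_k[x]$ be the set of complex polynomials of degree $k$ and $\mathbb{C}^k_{\mathrm{sym}}$ the set of unordered $k$-tuples of complex numbers; $r_k:\mathbb{C}_k[x]\to\mathbb{C}^k_{\mathrm{sym}}$ sends a polynomial to the unordered $k$-tuple of its roots (with multiplicity). $\mathcal{P}_k$ is the set of maps $p_x:M_{m\times n}(\mathbb{C})\to\mathbb{C}_k[x]$ of the form $p_x(A)=x^k+\sum_{i=1}^{k}q_i(A)x^{i-1}$, where each $q_i(A)$ is a polynomial function of the entries of $A$, such that $r_k(p_x(M_{m\times n}(\mathbb{C})))=\mathbb{C}^k_{\mathrm{sym}}$. A number $z\in\mathbb{C}$ is a zero of $A$ with respect to $p_x$ if the polynomial $p_x(A)$ vanishes at $x=z$; $A$ has repeated zeros with respect to $p_x$ if $p_x(A)$ has a root of multiplicity at least $2$, and distinct zeros otherwise. *)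

theory Defs
  imports "HOL-Analysis.Analysis" "HOL-Computational_Algebra.Computational_Algebra"
begin

inductive polyfun_entries :: "(complex^'n^'m \<Rightarrow> complex) \<Rightarrow> bool" where
  const: "polyfun_entries (\<lambda>A. c)"
| entry: "polyfun_entries (\<lambda>A. A $ i $ j)"
| add: "polyfun_entries f \<Longrightarrow> polyfun_entries g \<Longrightarrow> polyfun_entries (\<lambda>A. f A + g A)"
| mult: "polyfun_entries f \<Longrightarrow> polyfun_entries g \<Longrightarrow> polyfun_entries (\<lambda>A. f A * g A)"

definition px :: "nat \<Rightarrow> (nat \<Rightarrow> complex^'n^'m \<Rightarrow> complex) \<Rightarrow> complex^'n^'m \<Rightarrow> complex poly" where
  "px k q A = monom 1 k + (\<Sum>i=1..k. monom (q i A) (i - 1))"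

text \<open>Membership in P_k: the q_i are polynomial functions of the entries and
  every unordered k-tuple (multiset of size k) of complex numbers is the
  multiset of roots (with multiplicity) of some p_x(A).\<close>
definition in_Pk :: "nat \<Rightarrow> (nat \<Rightarrow> complex^'n^'m \<Rightarrow> complex) \<Rightarrow> bool" where
  "in_Pk k q \<longleftrightarrow> (\<forall>i\<in>{1..k}. polyfun_entries (q i)) \<and>
     proots ` (px k q ` UNIV) = {R :: complex multiset. size R = k}"

definition repeated_zeros :: "nat \<Rightarrow> (nat \<Rightarrow> complex^'n^'m \<Rightarrow> complex) \<Rightarrow> complex^'n^'m \<Rightarrow> bool" where
  "repeated_zeros k q A \<longleftrightarrow> (\<exists>z. order z (px k q A) \<ge> 2)"

end

theory Submission
  imports Defs "HOL-Complex_Analysis.Complex_Analysis" "Subresultants.Subresultant_Gcd" "HOL-Computational_Algebra.Field_as_Ring"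
begin

no_notation Matrix.vec_index (infixl \<open>$\<close> 100)
no_notation fps_nth (infixl \<open>$\<close> 75)

lemma hol_if_const:
  "f holomorphic_on D \<Longrightarrow> g holomorphic_on D \<Longrightarrow> (\<lambda>z. if b then f z else g z) holomorphic_on D"
  by (cases b) auto

lemma polyfun_hol:
  assumes "polyfun_entries f"
    and "\<And>i j. (\<lambda>z. F z $ i $ j) holomorphic_on D"
  shows "(\<lambda>z. f (F z)) holomorphic_on D"
  using assms(1)
proof induction
  case (const c) then show ?case by (intro holomorphic_intros)
next
  case (entry i j) then show ?case using assms(2) by simp
next
  case (add f g) then show ?case by (intro holomorphic_intros)
next
  case (mult f g) then show ?case by (intro holomorphic_intros)
qed

lemma degree_px:
  assumes "1 \<le> k"
  shows "degree (px k q A) = k"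
proof -
  have "degree (\<Sum>i=1..k. monom (q i A) (i - 1)) \<le> k - 1"
    by (rule degree_sum_le) (auto simp: degree_monom_le intro: order.trans[OF degree_monom_le])
  also have "\<dots> < degree (monom (1::complex) k)" using assms by (simp add: degree_monom_eq)
  finally show ?thesis unfolding px_def
    by (subst degree_add_eq_left) (auto simp: degree_monom_eq)
qed

lemma coeff_px_hol:
  assumes "\<forall>i\<in>{1..k}. polyfun_entries (q i)"
    and "\<And>i j. (\<lambda>z. F z $ i $ j) holomorphic_on D"
  shows "(\<lambda>z. coeff (px k q (F z)) n) holomorphic_on D"
proof -
  have e: "coeff (px k q (F z)) n = coeff (monom 1 k) n + (\<Sum>i=1..k. if i - 1 = n then q i (F z) else 0)" for z
    unfolding px_def coeff_add coeff_sum by (simp add: coeff_monom)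
  show ?thesis unfolding e
    apply (intro holomorphic_intros)
    subgoal for i by (cases "i - 1 = n") (use polyfun_hol[OF _ assms(2)] assms(1) in auto)
    done
qed

lemma rep_iff_res:
  fixes P :: "complex poly"
  assumes "degree P \<ge> 1"
  shows "(\<exists>z. order z P \<ge> 2) \<longleftrightarrow> resultant P (pderiv P) = 0"
proof -
  have P0: "P \<noteq> 0" using assms by auto
  have P'0: "pderiv P \<noteq> 0" using assms by (simp add: pderiv_eq_0_iff)
  have "(\<exists>z. order z P \<ge> 2) \<longleftrightarrow> (\<exists>z. poly P z = 0 \<and> poly (pderiv P) z = 0)"
  proof
    assume "\<exists>z. order z P \<ge> 2"
    then obtain z where z: "order z P \<ge> 2" by auto
    then have r: "poly P z = 0" using order_root P0 by force
    then have "order z (pderiv P) \<noteq> 0" using order_pderiv[OF P0 r] z by simp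
    then show "\<exists>z. poly P z = 0 \<and> poly (pderiv P) z = 0" using r order_root by blast
  next
    assume "\<exists>z. poly P z = 0 \<and> poly (pderiv P) z = 0"
    then obtain z where r: "poly P z = 0" and r': "poly (pderiv P) z = 0" by auto
    have "order z (pderiv P) \<noteq> 0" using r' P'0 order_root by blast
    then show "\<exists>z. order z P \<ge> 2" using order_pderiv[OF P0 r] by (intro exI[of _ z]) simp
  qed
  also have "\<dots> \<longleftrightarrow> degree (gcd P (pderiv P)) \<noteq> 0"
  proof
    assume "\<exists>z. poly P z = 0 \<and> poly (pderiv P) z = 0"
    then obtain z where a: "poly P z = 0" and b: "poly (pderiv P) z = 0" by auto
    have "[:-z,1:] dvd P" using a by (simp only: poly_eq_0_iff_dvd)
    moreover have "[:-z,1:] dvd pderiv P" using b by (simp only: poly_eq_0_iff_dvd)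
    ultimately have dv: "[:-z,1:] dvd gcd P (pderiv P)" by (rule gcd_greatest)
    have g0: "gcd P (pderiv P) \<noteq> 0" using P0 by (simp only: gcd_eq_0_iff) blast
    have "degree [:-z,1:] \<le> degree (gcd P (pderiv P))" by (rule dvd_imp_degree_le[OF dv g0])
    moreover have "degree [:-z,(1::complex):] = 1" by simp
    ultimately show "degree (gcd P (pderiv P)) \<noteq> 0" by linarith
  next
    assume d: "degree (gcd P (pderiv P)) \<noteq> 0"
    have nc: "\<not> constant (poly (gcd P (pderiv P)))"
      unfolding constant_degree by (rule d)
    obtain z where "poly (gcd P (pderiv P)) z = 0" using Fundamental_Theorem_Algebra.fundamental_theorem_of_algebra[OF nc] by blast
    then have g: "[:-z,1:] dvd gcd P (pderiv P)" by (simp only: poly_eq_0_iff_dvd)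
    have d1: "[:-z,1:] dvd P" by (rule dvd_trans[OF g gcd_dvd1])
    have d2: "[:-z,1:] dvd pderiv P" by (rule dvd_trans[OF g gcd_dvd2])
    have "poly P z = 0" "poly (pderiv P) z = 0" using d1 d2 by (simp_all only: poly_eq_0_iff_dvd)
    then show "\<exists>z. poly P z = 0 \<and> poly (pderiv P) z = 0" by blast
  qed
  also have "\<dots> \<longleftrightarrow> resultant P (pderiv P) = 0"
    by (rule div_exp_Lazard_gcd.resultant_0_gcd[symmetric])
  finally show ?thesis .
qed

lemma det_hol:
  assumes "\<And>i j. i < N \<Longrightarrow> j < N \<Longrightarrow> (\<lambda>z. f z i j) holomorphic_on D"
  shows "(\<lambda>z. det (mat N N (\<lambda>(i,j). f z i j) :: complex mat)) holomorphic_on D"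
proof -
  have pin: "p i < N" if "p permutes {0..<N}" "i < N" for p i
  proof -
    have "p i \<in> {0..<N}" using permutes_in_image[OF that(1), of i] that(2) by simp
    then show ?thesis by simp
  qed
  have e: "det (mat N N (\<lambda>(i,j). f z i j)) = (\<Sum>p \<in> {p. p permutes {0..<N}}.
     signof p * (\<Prod>i = 0..<N. f z i (p i)))" for z
  proof -
    have "det (mat N N (\<lambda>(i,j). f z i j)) = (\<Sum>p \<in> {p. p permutes {0..<N}}.
     signof p * (\<Prod>i = 0..<N. mat N N (\<lambda>(i,j). f z i j) $$ (i, p i)))"
      by (simp only: det_def dim_row_mat dim_col_mat simp_thms if_True)
    also have "\<dots> = (\<Sum>p \<in> {p. p permutes {0..<N}}.
     signof p * (\<Prod>i = 0..<N. f z i (p i)))"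
    proof (rule sum.cong[OF refl])
      fix p assume p: "p \<in> {p. p permutes {0..<N}}"
      have ix: "mat N N (\<lambda>(i,j). f z i j) $$ (i, p i) = f z i (p i)" if i: "i \<in> {0..<N}" for i
      proof -
        have i': "i < N" using i by simp
        have "mat N N (\<lambda>(i,j). f z i j) $$ (i, p i) = (\<lambda>(i,j). f z i j) (i, p i)"
          by (rule index_mat(1)[OF i' pin[OF _ i']]) (use p in simp)
        then show ?thesis by simp
      qed
      have "(\<Prod>i = 0..<N. mat N N (\<lambda>(i,j). f z i j) $$ (i, p i)) = (\<Prod>i = 0..<N. f z i (p i))"
        by (rule prod.cong[OF refl ix])
      then show "signof p * (\<Prod>i = 0..<N. mat N N (\<lambda>(i,j). f z i j) $$ (i, p i)) =
        signof p * (\<Prod>i = 0..<N. f z i (p i))" by (rule arg_cong)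
    qed
    finally show ?thesis .
  qed
  show ?thesis unfolding e
  proof (rule holomorphic_on_sum)
    fix p assume p: "p \<in> {p. p permutes {0..<N}}"
    show "(\<lambda>z. signof p * (\<Prod>i = 0..<N. f z i (p i))) holomorphic_on D"
    proof (rule holomorphic_on_mult[OF holomorphic_on_const holomorphic_on_prod])
      fix i assume "i \<in> {0..<N}"
      then have i': "i < N" by simp
      have pp: "p permutes {0..<N}" using p by simp
      show "(\<lambda>z. f z i (p i)) holomorphic_on D"
        by (rule assms[OF i' pin[OF pp i']])
    qed
  qed
qed

theorem theorem5p3:
  fixes k :: nat and q :: "nat \<Rightarrow> complex^'n^'m \<Rightarrow> complex"
    and D :: "complex set" and F :: "complex \<Rightarrow> complex^'n^'m"
  assumes "2 \<le> k" and "k \<le> CARD('m) * CARD('n)"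
    and "in_Pk k q"
    and "open D" and "connected D"
    and "\<And>i j. (\<lambda>z. F z $ i $ j) holomorphic_on D"
  shows "{z \<in> D. repeated_zeros k q (F z)} = D \<or>
         \<not> (\<exists>w\<in>D. w islimpt {z \<in> D. repeated_zeros k q (F z)})"
proof -
  define P where "P z = px k q (F z)" for z
  define R where "R z = resultant (P z) (pderiv (P z))" for z
  have poly: "\<forall>i\<in>{1..k}. polyfun_entries (q i)" using assms(3) unfolding in_Pk_def by auto
  have degP: "degree (P z) = k" for z unfolding P_def by (rule degree_px) (use assms(1) in simp)
  have degP': "degree (pderiv (P z)) = k - 1" for z using degP degree_pderiv by metis
  have rep: "repeated_zeros k q (F z) \<longleftrightarrow> R z = 0" for z
    unfolding repeated_zeros_def R_def P_def[symmetric]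
    by (rule rep_iff_res) (use degP assms(1) in simp)
  have cP: "(\<lambda>z. coeff (P z) n) holomorphic_on D" for n
    unfolding P_def by (rule coeff_px_hol[OF poly assms(6)])
  have cP': "(\<lambda>z. coeff (pderiv (P z)) n) holomorphic_on D" for n
    unfolding coeff_pderiv by (intro holomorphic_intros cP)
  have Re: "R z = det (sylvester_mat_sub k (k - 1) (P z) (pderiv (P z)))" for z
    unfolding R_def resultant_def sylvester_mat_def degP degP' ..
  have holR: "R holomorphic_on D"
    unfolding Re sylvester_mat_sub_def
    apply (rule det_hol)
    apply (intro hol_if_const cP cP' holomorphic_on_const)
    done
  have S: "{z \<in> D. repeated_zeros k q (F z)} = {z \<in> D. R z = 0}" using rep by auto
  show ?thesis
  proof (cases "\<exists>w\<in>D. w islimpt {z \<in> D. R z = 0}")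
    case True
    then obtain w where w: "w \<in> D" "w islimpt {z \<in> D. R z = 0}" by auto
    have "R x = 0" if "x \<in> D" for x
      by (rule analytic_continuation[OF holR assms(4,5) _ w(1) w(2)]) (use that in auto)
    then show ?thesis unfolding S by auto
  qed (simp add: S)
qed

end
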